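(* For every two natural numbers $a,b$ with $3\le a\le b$, there exists a finite, simple, connected graph $G$ such that $\dim_{wt}(G)=a$ and $res_{wt}(G)=b$.
   Context: $d(x,y)$ is the shortest-path distance. A set $W\subseteq V(G)$ is a resolving set if for every two distinct vertices $y,z$ there is $x\in W$ with $d(y,x)\ne d(z,x)$. A set $W$ is a weak total resolving set (WTR-set) if $W$ is resolving and, for every $w\in W$ and every $x\in V(G)\setminus W$, there is $w'\in W\setminus\{w\}$ with $d(x,w')\ne d(w,w')$. $\dim_{wt}(G)$ is the minimum cardinality of a WTR-set. The weak total resolving number $res_{wt}(G)$ is the minimum positive integer $r$ such that every set of $r$ vertices of $G$ is a WTR-set for $G$. *)

theory Defs
  imports Main
begin

definition simple_graph :: "'a set \<Rightarrow> ('a \<Rightarrow> 'a \<Rightarrow> bool) \<Rightarrow> bool" where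
  "simple_graph V E \<longleftrightarrow> finite V \<and> V \<noteq> {}
     \<and> (\<forall>x y. E x y \<longrightarrow> x \<in> V \<and> y \<in> V)
     \<and> (\<forall>x y. E x y \<longrightarrow> E y x)
     \<and> (\<forall>x. \<not> E x x)"

definition walk :: "'a set \<Rightarrow> ('a \<Rightarrow> 'a \<Rightarrow> bool) \<Rightarrow> 'a list \<Rightarrow> bool" where
  "walk V E p \<longleftrightarrow> p \<noteq> [] \<and> set p \<subseteq> V
     \<and> (\<forall>i. Suc i < length p \<longrightarrow> E (p ! i) (p ! Suc i))"

definition connected_graph :: "'a set \<Rightarrow> ('a \<Rightarrow> 'a \<Rightarrow> bool) \<Rightarrow> bool" where
  "connected_graph V E \<longleftrightarrow>
     (\<forall>x\<in>V. \<forall>y\<in>V. \<exists>p. walk V E p \<and> hd p = x \<and> last p = y)"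

definition gdist :: "'a set \<Rightarrow> ('a \<Rightarrow> 'a \<Rightarrow> bool) \<Rightarrow> 'a \<Rightarrow> 'a \<Rightarrow> nat" where
  "gdist V E x y = (LEAST n. \<exists>p. walk V E p \<and> hd p = x \<and> last p = y \<and> length p = Suc n)"

definition resolving_set :: "'a set \<Rightarrow> ('a \<Rightarrow> 'a \<Rightarrow> bool) \<Rightarrow> 'a set \<Rightarrow> bool" where
  "resolving_set V E W \<longleftrightarrow> W \<subseteq> V \<and>
     (\<forall>y\<in>V. \<forall>z\<in>V. y \<noteq> z \<longrightarrow> (\<exists>x\<in>W. gdist V E y x \<noteq> gdist V E z x))"

definition wtr_set :: "'a set \<Rightarrow> ('a \<Rightarrow> 'a \<Rightarrow> bool) \<Rightarrow> 'a set \<Rightarrow> bool" where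
  "wtr_set V E W \<longleftrightarrow> resolving_set V E W \<and>
     (\<forall>w\<in>W. \<forall>x\<in>V - W. \<exists>w'\<in>W - {w}. gdist V E x w' \<noteq> gdist V E w w')"

definition dim_wt :: "'a set \<Rightarrow> ('a \<Rightarrow> 'a \<Rightarrow> bool) \<Rightarrow> nat" where
  "dim_wt V E = (LEAST k. \<exists>W. wtr_set V E W \<and> card W = k)"

definition res_wt :: "'a set \<Rightarrow> ('a \<Rightarrow> 'a \<Rightarrow> bool) \<Rightarrow> nat" where
  "res_wt V E = (LEAST r. 0 < r \<and> (\<forall>W. W \<subseteq> V \<and> card W = r \<longrightarrow> wtr_set V E W))"

end

theory Submission
  imports Defs
begin

lemma walk_Cons:
  assumes "p \<noteq> []"
  shows "walk V E (x # p) \<longleftrightarrow> x \<in> V \<and> E x (hd p) \<and> walk V E p"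
proof
  assume h: "walk V E (x # p)"
  have "\<forall>i. Suc i < length p \<longrightarrow> E (p ! i) (p ! Suc i)"
  proof (intro allI impI)
    fix i assume "Suc i < length p"
    then have "Suc (Suc i) < length (x#p)" by simp
    with h have "E ((x#p) ! Suc i) ((x#p) ! Suc (Suc i))" unfolding walk_def by blast
    then show "E (p ! i) (p ! Suc i)" by simp
  qed
  moreover have "E ((x#p) ! 0) ((x#p) ! Suc 0)" using h assms unfolding walk_def by (metis length_Cons length_greater_0_conv Suc_less_eq)
  ultimately show "x \<in> V \<and> E x (hd p) \<and> walk V E p" using h assms unfolding walk_def
    by (simp add: hd_conv_nth)
next
  assume h: "x \<in> V \<and> E x (hd p) \<and> walk V E p"
  show "walk V E (x # p)" unfolding walk_def
  proof (intro conjI allI impI)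
    show "set (x # p) \<subseteq> V" using h unfolding walk_def by auto
    fix i assume "Suc i < length (x # p)"
    then show "E ((x # p) ! i) ((x # p) ! Suc i)"
      using h assms unfolding walk_def by (cases i) (auto simp: hd_conv_nth)
  qed simp
qed

lemma walk_lower:
  assumes "walk V E p" "\<And>u v y. E u v \<Longrightarrow> D u y \<le> D v y + (1::nat)" "\<And>y. D y y = 0"
  shows "D (hd p) (last p) \<le> length p - 1"
  using assms(1)
proof (induction p)
  case Nil then show ?case by (simp add: walk_def)
next
  case (Cons x q)
  show ?case
  proof (cases "q = []")
    case True then show ?thesis using assms(3) by simp
  next
    case False
    with Cons.prems have "E x (hd q)" "walk V E q" using walk_Cons by metis+
    with Cons.IH have "D (hd q) (last q) \<le> length q - 1" by blast
    moreover have "D x (last q) \<le> D (hd q) (last q) + 1" using assms(2) \<open>E x (hd q)\<close> by blast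
    ultimately show ?thesis using False by (cases q) auto
  qed
qed

lemma walk_exists:
  assumes "y \<in> V" "\<And>x. x \<in> V \<Longrightarrow> D x y = (0::nat) \<Longrightarrow> x = y"
    "\<And>x. x \<in> V \<Longrightarrow> D x y \<noteq> 0 \<Longrightarrow> \<exists>z\<in>V. E x z \<and> Suc (D z y) = D x y"
  shows "x \<in> V \<Longrightarrow> \<exists>p. walk V E p \<and> hd p = x \<and> last p = y \<and> length p = Suc (D x y)"
proof (induction "D x y" arbitrary: x)
  case 0
  then have "x = y" using assms(2) by metis
  then show ?case using 0 by (intro exI[of _ "[x]"]) (auto simp: walk_def)
next
  case (Suc n)
  then obtain z where z: "z \<in> V" "E x z" "Suc (D z y) = D x y" using assms(3) by force
  then obtain p where p: "walk V E p" "hd p = z" "last p = y" "length p = Suc (D z y)"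
    using Suc by (metis Suc_inject)
  have "p \<noteq> []" using p by auto
  then have "walk V E (x # p)" using walk_Cons p z Suc.prems by metis
  then show ?case using p z \<open>p \<noteq> []\<close> by (intro exI[of _ "x # p"]) auto
qed

lemma gdist_char:
  assumes "x \<in> V" "y \<in> V"
    "\<And>u v y. E u v \<Longrightarrow> D u y \<le> D v y + (1::nat)" "\<And>y. D y y = 0"
    "\<And>x. x \<in> V \<Longrightarrow> D x y = (0::nat) \<Longrightarrow> x = y"
    "\<And>x. x \<in> V \<Longrightarrow> D x y \<noteq> 0 \<Longrightarrow> \<exists>z\<in>V. E x z \<and> Suc (D z y) = D x y"
  shows "gdist V E x y = D x y"
proof -
  obtain p where p: "walk V E p" "hd p = x" "last p = y" "length p = Suc (D x y)"
    using walk_exists[of y V D E x] assms by blast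
  show ?thesis unfolding gdist_def
  proof (rule Least_equality)
    show "\<exists>p. walk V E p \<and> hd p = x \<and> last p = y \<and> length p = Suc (D x y)" using p by blast
  next
    fix n assume "\<exists>p. walk V E p \<and> hd p = x \<and> last p = y \<and> length p = Suc n"
    then obtain q where "walk V E q" "hd q = x" "last q = y" "length q = Suc n" by blast
    then show "D x y \<le> n" using walk_lower[of V E q D] assms(3,4) by force
  qed
qed

definition DD :: "nat \<Rightarrow> nat \<Rightarrow> nat \<Rightarrow> nat" where
  "DD m x y = (min x m - min y m) + (min y m - min x m) + (if x \<noteq> y \<and> (m < x \<or> m < y) then 1 else 0)"

definition EE :: "nat \<Rightarrow> nat \<Rightarrow> nat \<Rightarrow> nat \<Rightarrow> bool" where
  "EE m b x y \<longleftrightarrow> x < b \<and> y < b \<and> x \<noteq> y \<and> ((m \<le> x \<and> m \<le> y) \<or> x = Suc y \<or> y = Suc x)"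

lemma DD_edge: "EE m b u v \<Longrightarrow> DD m u y \<le> DD m v y + 1"
  unfolding EE_def DD_def by (auto simp: min_def split: if_splits)

lemma DD_refl: "DD m y y = 0" unfolding DD_def by simp

lemma DD_zero: "DD m x y = 0 \<Longrightarrow> x = y"
  unfolding DD_def by (auto simp: min_def split: if_splits)

lemma DD_step:
  assumes "x < b" "y < b" "m < b" "DD m x y \<noteq> 0"
  shows "\<exists>z\<in>{0..<b}. EE m b x z \<and> Suc (DD m z y) = DD m x y"
proof -
  define z where "z = (if m \<le> x \<and> m \<le> y then y else if x < min y m then x+1 else if m < x then m else x - 1)"
  have "x \<noteq> y" using assms DD_refl by metis
  then have "z < b \<and> EE m b x z \<and> Suc (DD m z y) = DD m x y"
    using assms unfolding z_def EE_def DD_def by (auto simp: min_def split: if_splits)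
  then show ?thesis by auto
qed

lemma gdist_DD:
  assumes "x < b" "y < b" "m < b"
  shows "gdist {0..<b} (EE m b) x y = DD m x y"
  apply (rule gdist_char)
  using assms DD_edge DD_refl DD_zero DD_step by auto

lemma wtr_iff:
  assumes "W \<subseteq> {0..<b}" "m < b"
  shows "wtr_set {0..<b} (EE m b) W \<longleftrightarrow>
     (\<forall>y\<in>{0..<b}. \<forall>z\<in>{0..<b}. y \<noteq> z \<longrightarrow> (\<exists>x\<in>W. DD m y x \<noteq> DD m z x)) \<and>
     (\<forall>w\<in>W. \<forall>x\<in>{0..<b} - W. \<exists>w'\<in>W - {w}. DD m x w' \<noteq> DD m w w')"
proof -
  have g: "\<And>x y. x \<in> {0..<b} \<Longrightarrow> y \<in> {0..<b} \<Longrightarrow> gdist {0..<b} (EE m b) x y = DD m x y"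
    using gdist_DD assms by auto
  have A: "(\<forall>y\<in>{0..<b}. \<forall>z\<in>{0..<b}. y \<noteq> z \<longrightarrow> (\<exists>x\<in>W. gdist {0..<b} (EE m b) y x \<noteq> gdist {0..<b} (EE m b) z x))
     \<longleftrightarrow> (\<forall>y\<in>{0..<b}. \<forall>z\<in>{0..<b}. y \<noteq> z \<longrightarrow> (\<exists>x\<in>W. DD m y x \<noteq> DD m z x))"
    using assms(1) g by (smt (verit, best) subsetD)
  have B: "(\<forall>w\<in>W. \<forall>x\<in>{0..<b} - W. \<exists>w'\<in>W - {w}. gdist {0..<b} (EE m b) x w' \<noteq> gdist {0..<b} (EE m b) w w')
     \<longleftrightarrow> (\<forall>w\<in>W. \<forall>x\<in>{0..<b} - W. \<exists>w'\<in>W - {w}. DD m x w' \<noteq> DD m w w')"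
    using assms(1) g by (smt (verit, best) DiffD1 subsetD)
  show ?thesis unfolding wtr_set_def resolving_set_def using A B assms(1) by blast
qed

lemma twins:
  assumes "m + 3 \<le> b" "W \<subseteq> {0..<b}" "wtr_set {0..<b} (EE m b) W"
  shows "{Suc m..<b} \<subseteq> W"
proof
  fix c assume c: "c \<in> {Suc m..<b}"
  show "c \<in> W"
  proof (rule ccontr)
    assume cW: "c \<notin> W"
    define c' where "c' = (if c = Suc m then Suc (Suc m) else Suc m)"
    have c': "c' \<in> {Suc m..<b}" "c' \<noteq> c" using c assms(1) unfolding c'_def by auto
    have tw: "\<And>x. x \<noteq> c \<Longrightarrow> x \<noteq> c' \<Longrightarrow> DD m c x = DD m c' x"
      using c c' unfolding DD_def by (auto simp: min_def)
    have R: "\<forall>y\<in>{0..<b}. \<forall>z\<in>{0..<b}. y \<noteq> z \<longrightarrow> (\<exists>x\<in>W. DD m y x \<noteq> DD m z x)"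
     and T: "\<forall>w\<in>W. \<forall>x\<in>{0..<b} - W. \<exists>w'\<in>W - {w}. DD m x w' \<noteq> DD m w w'"
      using wtr_iff[of W b m] assms by auto
    show False
    proof (cases "c' \<in> W")
      case True
      then obtain w' where "w' \<in> W - {c'}" "DD m c w' \<noteq> DD m c' w'"
        using T True c cW by (meson DiffI atLeastLessThan_iff zero_le)
      then show False using tw cW by (metis DiffE singletonI)
    next
      case False
      then obtain x where "x \<in> W" "DD m c x \<noteq> DD m c' x"
        using R c c' by (metis atLeastLessThan_iff zero_le)
      then show False using tw cW False by metis
    qed
  qed
qed

lemma clique_not_wtr:
  assumes "m + 3 \<le> b"
  shows "\<not> wtr_set {0..<b} (EE m b) {Suc m..<b}"
proof
  assume "wtr_set {0..<b} (EE m b) {Suc m..<b}"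
  then have T: "\<forall>w\<in>{Suc m..<b}. \<forall>x\<in>{0..<b} - {Suc m..<b}. \<exists>w'\<in>{Suc m..<b} - {w}. DD m x w' \<noteq> DD m w w'"
    using wtr_iff[of "{Suc m..<b}" b m] assms by auto
  have "Suc m \<in> {Suc m..<b}" "m \<in> {0..<b} - {Suc m..<b}" using assms by auto
  then obtain w' where "w' \<in> {Suc m..<b} - {Suc m}" "DD m m w' \<noteq> DD m (Suc m) w'"
    using T by blast
  then show False unfolding DD_def by (auto simp: min_def)
qed

lemma top_wtr:
  assumes "m + 3 \<le> b"
  shows "wtr_set {0..<b} (EE m b) {m..<b}"
proof -
  have R: "\<forall>y\<in>{0..<b}. \<forall>z\<in>{0..<b}. y \<noteq> z \<longrightarrow> (\<exists>x\<in>{m..<b}. DD m y x \<noteq> DD m z x)"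
  proof (intro ballI impI)
    fix y z assume yz: "y \<in> {0..<b}" "z \<in> {0..<b}" "y \<noteq> z"
    show "\<exists>x\<in>{m..<b}. DD m y x \<noteq> DD m z x"
    proof (cases "m \<le> y")
      case True
      then show ?thesis using yz DD_refl DD_zero by (metis atLeastLessThan_iff)
    next
      case False
      then show ?thesis
      proof (cases "m \<le> z")
        case True
        then show ?thesis using yz DD_refl DD_zero by (metis atLeastLessThan_iff)
      next
        case False
        have "DD m y m \<noteq> DD m z m" using False \<open>\<not> m \<le> y\<close> yz unfolding DD_def by (auto simp: min_def)
        then show ?thesis using assms by auto
      qed
    qed
  qed
  have T: "\<forall>w\<in>{m..<b}. \<forall>x\<in>{0..<b} - {m..<b}. \<exists>w'\<in>{m..<b} - {w}. DD m x w' \<noteq> DD m w w'"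
  proof (intro ballI)
    fix w x assume w: "w \<in> {m..<b}" and x: "x \<in> {0..<b} - {m..<b}"
    define w' where "w' = (if w = Suc m then Suc (Suc m) else Suc m)"
    have "w' \<in> {m..<b} - {w}" using w assms unfolding w'_def by auto
    moreover have "DD m x w' \<noteq> DD m w w'" using w x assms unfolding w'_def DD_def by (auto simp: min_def)
    ultimately show "\<exists>w'\<in>{m..<b} - {w}. DD m x w' \<noteq> DD m w w'" by blast
  qed
  show ?thesis using wtr_iff[of "{m..<b}" b m] assms R T by auto
qed

lemma all_wtr:
  assumes "m + 3 \<le> b"
  shows "wtr_set {0..<b} (EE m b) {0..<b}"
proof -
  have R: "\<forall>y\<in>{0..<b}. \<forall>z\<in>{0..<b}. y \<noteq> z \<longrightarrow> (\<exists>x\<in>{0..<b}. DD m y x \<noteq> DD m z x)"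
    using DD_refl DD_zero by metis
  show ?thesis using wtr_iff[of "{0..<b}" b m] assms R by auto
qed

theorem theorem8:
  fixes a b :: nat
  assumes "3 \<le> a" and "a \<le> b"
  shows "\<exists>(V :: nat set) (E :: nat \<Rightarrow> nat \<Rightarrow> bool).
           simple_graph V E \<and> connected_graph V E \<and>
           dim_wt V E = a \<and> res_wt V E = b"
proof -
  define m where "m = b - a"
  have mb: "m + 3 \<le> b" using assms unfolding m_def by simp
  have sg: "simple_graph {0..<b} (EE m b)"
    unfolding simple_graph_def EE_def using mb by auto
  have cg: "connected_graph {0..<b} (EE m b)"
    unfolding connected_graph_def
  proof (intro ballI)
    fix x y assume "x \<in> {0..<b}" "y \<in> {0..<b}"
    moreover have "m < b" using mb by simp
    ultimately show "\<exists>p. walk {0..<b} (EE m b) p \<and> hd p = x \<and> last p = y"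
      using walk_exists[of y "{0..<b}" "DD m" "EE m b" x] DD_zero[of m _ y] DD_step[of _ b y m]
      by (metis atLeastLessThan_iff)
  qed
  have dim: "dim_wt {0..<b} (EE m b) = a"
    unfolding dim_wt_def
  proof (rule Least_equality)
    show "\<exists>W. wtr_set {0..<b} (EE m b) W \<and> card W = a"
      using top_wtr[OF mb] assms unfolding m_def by (intro exI[of _ "{b-a..<b}"]) auto
  next
    fix k assume "\<exists>W. wtr_set {0..<b} (EE m b) W \<and> card W = k"
    then obtain W where W: "wtr_set {0..<b} (EE m b) W" "card W = k" by blast
    have Wsub: "W \<subseteq> {0..<b}" using W unfolding wtr_set_def resolving_set_def by blast
    have sub: "{Suc m..<b} \<subseteq> W" using twins[OF mb Wsub W(1)] .
    have ne: "W \<noteq> {Suc m..<b}" using clique_not_wtr[OF mb] W by auto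
    have "finite W" using Wsub finite_subset by blast
    then have "card {Suc m..<b} < card W" using sub ne by (intro psubset_card_mono) auto
    then show "a \<le> k" using W assms unfolding m_def by simp
  qed
  have res: "res_wt {0..<b} (EE m b) = b"
    unfolding res_wt_def
  proof (rule Least_equality)
    show "0 < b \<and> (\<forall>W. W \<subseteq> {0..<b} \<and> card W = b \<longrightarrow> wtr_set {0..<b} (EE m b) W)"
    proof (intro conjI allI impI)
      show "0 < b" using mb by simp
      fix W assume "W \<subseteq> {0..<b} \<and> card W = b"
      then have "W = {0..<b}" by (metis card_atLeastLessThan card_subset_eq diff_zero finite_atLeastLessThan)
      then show "wtr_set {0..<b} (EE m b) W" using all_wtr[OF mb] by simp
    qed
  next
    fix r assume r: "0 < r \<and> (\<forall>W. W \<subseteq> {0..<b} \<and> card W = r \<longrightarrow> wtr_set {0..<b} (EE m b) W)"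
    show "b \<le> r"
    proof (rule ccontr)
      assume "\<not> b \<le> r"
      then have "{0..<r} \<subseteq> {0..<b}" by auto
      then have "wtr_set {0..<b} (EE m b) {0..<r}" using r by auto
      then have "{Suc m..<b} \<subseteq> {0..<r}" using twins[OF mb] \<open>{0..<r} \<subseteq> {0..<b}\<close> by blast
      moreover have "b - 1 \<in> {Suc m..<b}" using mb by auto
      ultimately show False using \<open>\<not> b \<le> r\<close> by auto
    qed
  qed
  show ?thesis using sg cg dim res by blast
qed

end
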